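(* Suppose the basic set of weighting functions is used, and suppose that (i) Assumption A8 holds and (ii) $K$ has support $[-1,1]$, is continuous, and is strictly positive on $(-1,1)$. Then Assumption A9 holds.
   Context: For each $n$, $X_1,\dots,X_n$ are i.i.d. copies of a scalar random variable $X$ with support infimum $s_l$ and supremum $s_r$. Basic set of weighting functions: $\mathcal{S}_n=\{(x,h):x\in\{X_1,\dots,X_n\},h\in H_n\}$, $H_n=\{h=h_{\max}u^l:h\ge h_{\min},l=0,1,2,\dots\}$, $u=0.5$, $h_{\max}=\max_{i,j}|X_i-X_j|/2$, $h_{\min}=0.4h_{\max}(\log n/n)^{1/3}$, with kernel weighting functions $Q(x_1,x_2,(x,h))=|x_1-x_2|^kK((x_1-x)/h)K((x_2-x)/h)$ for a fixed $k\ge0$; $p=|\mathcal{S}_n|$. A8: $c_3(x_2-x_1)\le\Pr(X\in[x_1,x_2])\le C_3(x_2-x_1)$ for all $[x_1,x_2]\subset[s_l,s_r]$, constants $c_3,C_3>0$. A9 (for fixed $\beta\in(0,1]$, $h_n=(\log p/n)^{1/(2\beta+3)}$, and some constants $c_4,C_4,c_5>0$): with probability approaching one, for all $[x_1,x_2]\subset[s_l,s_r]$ with $x_2-x_1=h_n$ there exists $s\in\mathcal{S}_n$ such that (i) the support of $Q(\cdot,\cdot,s)$ is contained in $[x_1,x_2]^2$, (ii) $Q(\cdot,\cdot,s)\le C_4h_n^k$, (iii) there are non-intersecting subintervals $[x_{l1},x_{r1}],[x_{l2},x_{r2}]$ of $[x_1,x_2]$ with $x_{r1}-x_{l1}\ge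 c_5h_n$, $x_{r2}-x_{l2}\ge c_5h_n$, $x_{l2}-x_{r1}\ge c_5h_n$, and $Q(y_1,y_2,s)\ge c_4h_n^k$ whenever $y_1\in[x_{l1},x_{r1}]$, $y_2\in[x_{l2},x_{r2}]$. *)

theory Defs
  imports "HOL-Probability.Probability"
begin

text \<open>Power with the convention 0^0 = 1 (exponent k \<ge> 0 real).\<close>
definition kpow :: "real \<Rightarrow> real \<Rightarrow> real" where
  "kpow x k = (if k = 0 then 1 else x powr k)"

definition dist_support :: "real measure \<Rightarrow> real set" where
  "dist_support D = {x. \<forall>e>0. measure D {x - e<..<x + e} > 0}"

text \<open>Basic set of weighting functions built from the sample w 0, ..., w (n-1).\<close>
definition h_max :: "nat \<Rightarrow> (nat \<Rightarrow> real) \<Rightarrow> real" where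
  "h_max n w = Max {\<bar>w i - w j\<bar> | i j. i < n \<and> j < n} / 2"

definition h_min :: "nat \<Rightarrow> (nat \<Rightarrow> real) \<Rightarrow> real" where
  "h_min n w = 0.4 * h_max n w * (ln (real n) / real n) powr (1/3)"

definition H_set :: "nat \<Rightarrow> (nat \<Rightarrow> real) \<Rightarrow> real set" where
  "H_set n w = {h. \<exists>l::nat. h = h_max n w * (1/2) ^ l \<and> h \<ge> h_min n w}"

definition S_set :: "nat \<Rightarrow> (nat \<Rightarrow> real) \<Rightarrow> (real \<times> real) set" where
  "S_set n w = {(w i, h) | i h. i < n \<and> h \<in> H_set n w}"

definition Qw :: "(real \<Rightarrow> real) \<Rightarrow> real \<Rightarrow> real \<Rightarrow> real \<Rightarrow> real \<times> real \<Rightarrow> real" where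
  "Qw K k y1 y2 s = kpow \<bar>y1 - y2\<bar> k * K ((y1 - fst s) / snd s) * K ((y2 - fst s) / snd s)"

definition A9_event ::
  "(real \<Rightarrow> real) \<Rightarrow> real \<Rightarrow> real \<Rightarrow> real \<Rightarrow> real \<Rightarrow> real \<Rightarrow> real \<Rightarrow> real \<Rightarrow> nat \<Rightarrow> (nat \<Rightarrow> real) \<Rightarrow> bool" where
  "A9_event K k sl sr \<beta> c4 C4 c5 n w =
    (let p = card (S_set n w);
         hn = (ln (real p) / real n) powr (1 / (2 * \<beta> + 3))
     in \<forall>x1 x2. sl \<le> x1 \<and> x2 \<le> sr \<and> x2 - x1 = hn \<longrightarrow>
          (\<exists>s\<in>S_set n w.
             closure {(y1, y2). Qw K k y1 y2 s \<noteq> 0} \<subseteq> {x1..x2} \<times> {x1..x2} \<and>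
             (\<forall>y1 y2. Qw K k y1 y2 s \<le> C4 * kpow hn k) \<and>
             (\<exists>xl1 xr1 xl2 xr2. x1 \<le> xl1 \<and> xr2 \<le> x2 \<and>
                xr1 - xl1 \<ge> c5 * hn \<and> xr2 - xl2 \<ge> c5 * hn \<and> xl2 - xr1 \<ge> c5 * hn \<and>
                (\<forall>y1 y2. y1 \<in> {xl1..xr1} \<and> y2 \<in> {xl2..xr2} \<longrightarrow>
                    Qw K k y1 y2 s \<ge> c4 * kpow hn k))))"

end

theory Submission
  imports Defs "HOL-Real_Asymp.Real_Asymp"
begin


lemma support_full:
  fixes D :: "real measure"
  assumes probD: "prob_space D" and setsD: "sets D = sets borel"
    and ne: "dist_support D \<noteq> {}" and bd: "bounded (dist_support D)"
  shows "measure D {Inf (dist_support D)..Sup (dist_support D)} = 1"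
proof -
  interpret prob_space D by fact
  let ?S = "dist_support D"
  define F where "F = {T. \<exists>x e. e > 0 \<and> T = {x-e<..<x+e} \<and> measure D T = 0}"
  have opF: "\<And>T. T \<in> F \<Longrightarrow> open T" unfolding F_def by auto
  obtain F' where F': "F' \<subseteq> F" "countable F'" "\<Union>F' = \<Union>F"
    using Lindelof[OF opF] by metis
  have nul: "(\<Union>T\<in>F'. T) \<in> null_sets D"
  proof (rule null_sets_UN'[OF F'(2)])
    fix T assume "T \<in> F'"
    then have "T \<in> F" using F' by auto
    then obtain x e where T: "T = {x-e<..<x+e}" "measure D T = 0" unfolding F_def by auto
    have Tm: "T \<in> sets D" using T setsD by auto
    show "T \<in> null_sets D" using T(2) Tm
      by (simp add: emeasure_eq_measure null_setsI)
  qed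
  have sub: "UNIV - ?S \<subseteq> \<Union>F"
  proof
    fix x assume "x \<in> UNIV - ?S"
    then obtain e where e: "e > 0" "\<not> measure D {x - e<..<x + e} > 0"
      unfolding dist_support_def by auto
    then have "measure D {x - e<..<x + e} = 0" using measure_nonneg[of D] by (meson linorder_neqE_linordered_idom not_less)
    then have "{x - e<..<x + e} \<in> F" using e unfolding F_def by blast
    moreover have "x \<in> {x - e<..<x + e}" using e by auto
    ultimately show "x \<in> \<Union>F" by blast
  qed
  have bb: "bdd_below ?S" "bdd_above ?S" using bd by (auto simp: bounded_imp_bdd_below bounded_imp_bdd_above)
  have "?S \<subseteq> {Inf ?S..Sup ?S}" using bb by (auto intro: cInf_lower cSup_upper)
  then have "UNIV - {Inf ?S..Sup ?S} \<subseteq> (\<Union>T\<in>F'. T)" using sub F'(3) by auto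
  then have "UNIV - {Inf ?S..Sup ?S} \<in> null_sets D"
    using nul setsD by (auto intro: null_sets_subset)
  then have "prob (UNIV - {Inf ?S..Sup ?S}) = 0" by (simp add: measure_eq_0_null_sets)
  moreover have "space D = UNIV" using setsD sets_eq_imp_space_eq by fastforce
  moreover have "{Inf ?S..Sup ?S} \<in> events" using setsD by auto
  ultimately show ?thesis using prob_compl[of "{Inf ?S..Sup ?S}"] by simp
qed



lemma kpow_nonneg: "0 \<le> kpow x k"
  by (simp add: kpow_def)

lemma kpow_mono: "0 \<le> x \<Longrightarrow> x \<le> y \<Longrightarrow> 0 \<le> k \<Longrightarrow> kpow x k \<le> kpow y k"
  by (simp add: kpow_def powr_mono2)

lemma kpow_mult: "0 < c \<Longrightarrow> 0 \<le> x \<Longrightarrow> kpow (c * x) k = c powr k * kpow x k"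
  by (simp add: kpow_def powr_mult)

lemma dyadic_choice:
  fixes H y :: real
  assumes "0 < y" "y \<le> H"
  shows "\<exists>l::nat. y/2 < H * (1/2)^l \<and> H * (1/2)^l \<le> y"
proof -
  have Hp: "H > 0" using assms by linarith
  obtain l0 :: nat where "(1/2::real)^l0 < y / H"
    using real_arch_pow_inv[of "y/H" "1/2::real"] assms Hp by auto
  then have ex: "H * (1/2)^l0 \<le> y" using Hp by (simp add: field_simps)
  define l where "l = (LEAST l::nat. H * (1/2)^l \<le> y)"
  have l1: "H * (1/2)^l \<le> y" unfolding l_def by (rule LeastI[of _ l0], rule ex)
  show ?thesis
  proof (cases l)
    case 0
    then have "y/2 < H * (1/2)^l" using l1 assms by auto
    then show ?thesis using l1 by blast
  next
    case (Suc m)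
    then have "\<not> H * (1/2)^m \<le> y" using not_less_Least[of m "\<lambda>l. H * (1/2)^l \<le> y"] l_def by auto
    then have "y/2 < H * (1/2)^l" using Suc by auto
    then show ?thesis using l1 by blast
  qed
qed

lemma hmax_bounds:
  fixes w :: "nat \<Rightarrow> real"
  assumes "\<forall>i<n. w i \<in> {sl..sr}" "i0 < n" "i1 < n"
  shows "\<bar>w i1 - w i0\<bar> / 2 \<le> h_max n w" "h_max n w \<le> (sr - sl) / 2"
proof -
  let ?A = "{\<bar>w i - w j\<bar> | i j. i < n \<and> j < n}"
  have eq: "?A = (\<lambda>(i,j). \<bar>w i - w j\<bar>) ` ({..<n} \<times> {..<n})" by auto
  have fin: "finite ?A" unfolding eq by auto
  have mem: "\<bar>w i1 - w i0\<bar> \<in> ?A" using assms by blast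
  then have ne: "?A \<noteq> {}" by auto
  have "\<bar>w i1 - w i0\<bar> \<le> Max ?A" using Max_ge[OF fin mem] .
  then show "\<bar>w i1 - w i0\<bar> / 2 \<le> h_max n w" unfolding h_max_def by simp
  have "\<forall>a\<in>?A. a \<le> sr - sl"
  proof
    fix a assume "a \<in> ?A"
    then obtain i j where "a = \<bar>w i - w j\<bar>" "i < n" "j < n" by blast
    then have "w i \<in> {sl..sr}" "w j \<in> {sl..sr}" using assms(1) by auto
    then show "a \<le> sr - sl" using \<open>a = _\<close> by auto
  qed
  then have "Max ?A \<le> sr - sl" using Max_le_iff[OF fin ne] by blast
  then show "h_max n w \<le> (sr - sl) / 2" unfolding h_max_def by simp
qed



lemma core:
  fixes K :: "real \<Rightarrow> real" and k sl sr \<beta> M m :: real and n N :: nat and w :: "nat \<Rightarrow> real"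
  assumes lt: "sl < sr" and k0: "0 \<le> k" and bp: "0 < \<beta>"
    and Kbd: "\<forall>t. \<bar>K t\<bar> \<le> M" and Kz: "\<forall>t. K t \<noteq> 0 \<longrightarrow> -1 \<le> t \<and> t \<le> 1"
    and Kmin: "\<forall>t. \<bar>t\<bar> \<le> 1/2 \<longrightarrow> m \<le> K t" and mpos: "0 < m"
    and n2: "2 \<le> n" and N4: "4 \<le> N"
    and dlt: "(sr - sl) / N \<le> (ln 2 / n) powr (1/3) / 16"
    and H3: "0.2 * (sr - sl) * (ln n / n) powr (1/3) \<le> (ln 2 / n) powr (1/(2*\<beta>+3)) / 8"
    and samp: "\<forall>i<n. w i \<in> {sl..sr}"
    and cov: "\<forall>j<N. \<exists>i<n. w i \<in> {sl + real j * ((sr-sl)/N) .. sl + (real j + 1) * ((sr-sl)/N)}"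
  shows "A9_event K k sl sr \<beta> (m^2 * (1/24) powr k) (M^2) (1/24) n w"
proof -
  define L where "L = sr - sl"
  define \<delta> where "\<delta> = L / N"
  define a where "a = 1/(2*\<beta>+3)"
  have Lp: "L > 0" using lt L_def by simp
  have Npos: "real N \<ge> 4" using N4 by simp
  have dp: "\<delta> > 0" using Lp Npos \<delta>_def by simp
  have dL: "\<delta> \<le> L/4" using Lp Npos unfolding \<delta>_def by (simp add: field_simps)
  have NdL: "real N * \<delta> = L" using Npos unfolding \<delta>_def by simp
  have ap: "0 < a" "a \<le> 1/3" using bp unfolding a_def by (auto simp: field_simps)
  have n2r: "real n \<ge> 2" using n2 by simp
  have ln2p: "0 < ln (2::real)" by simp
  have "ln (2::real) < 2" using ln_less_self[of 2] by simp
  then have "ln (2::real) \<le> real n" using n2r by linarith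
  then have ln2n: "ln 2 / real n \<le> 1" using n2r by (simp add: field_simps)
  have ln2np: "0 < ln 2 / real n" using n2r by simp
  have pw13: "(ln 2 / real n) powr (1/3) \<le> (ln 2 / real n) powr a"
    using powr_mono'[OF ap(2)] ln2n ln2np by auto
  obtain i0 where i0: "i0 < n" "w i0 \<in> {sl .. sl + (0 + 1) * \<delta>}"
    using cov N4 unfolding \<delta>_def L_def by fastforce
  obtain i1 where i1: "i1 < n" "w i1 \<in> {sl + real (N-1) * \<delta> .. sl + (real (N-1) + 1) * \<delta>}"
    using cov N4 unfolding \<delta>_def L_def by (metis diff_less less_le_trans numeral_less_iff semiring_norm(69) zero_less_one zero_less_numeral)
  have "real (N-1) = real N - 1" using N4 by simp
  then have "sl + real (N-1) * \<delta> = sr - \<delta>" using NdL L_def by (simp add: algebra_simps)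
  then have w1: "w i1 \<ge> sr - \<delta>" using i1 by simp
  have w0: "w i0 \<le> sl + \<delta>" using i0 by simp
  have wdist: "\<bar>w i1 - w i0\<bar> \<ge> L/2" using w0 w1 dL L_def by linarith
  have hb: "\<bar>w i1 - w i0\<bar> / 2 \<le> h_max n w" "h_max n w \<le> (sr - sl) / 2"
    using hmax_bounds[OF samp i0(1) i1(1)] by auto
  have hmax_lo: "L/4 \<le> h_max n w" using hb(1) wdist by simp
  have hmax_hi: "h_max n w \<le> L/2" using hb(2) L_def by simp
  have hmp: "h_max n w > 0" using hmax_lo Lp by simp
  define r where "r = 0.4 * (ln (real n) / real n) powr (1/3)"
  have lnn: "0 < ln (real n) / real n" using n2r by simp
  have "ln (real n) < real n" using n2r ln_less_self[of "real n"] by simp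
  then have "ln (real n) \<le> 1 * real n" by simp
  then have lnn1: "ln (real n) / real n \<le> 1" using n2r by (subst divide_le_eq) auto
  have "ln (real n) > 0" using n2r by simp
  then have rp: "r > 0" using n2r unfolding r_def by simp
  have "(ln (real n) / real n) powr (1/3) \<le> 1 powr (1/3)"
    using lnn lnn1 by (intro powr_mono2) auto
  then have r1: "r \<le> 1" unfolding r_def by simp
  have hmin_eq: "h_min n w = h_max n w * r" unfolding h_min_def r_def by simp
  have hmax_in: "h_max n w \<in> H_set n w"
    unfolding H_set_def hmin_eq using r1 hmp by (auto intro!: exI[of _ 0])
  obtain M0 :: nat where M0: "(1/2::real)^M0 < r" using real_arch_pow_inv[OF rp, of "1/2"] by auto
  have Hsub: "H_set n w \<subseteq> (\<lambda>l. h_max n w * (1/2)^l) ` {..<M0}"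
  proof
    fix h assume "h \<in> H_set n w"
    then obtain l :: nat where l: "h = h_max n w * (1/2)^l" "h \<ge> h_max n w * r"
      unfolding H_set_def hmin_eq by auto
    have "(1/2::real)^l \<ge> r" using l hmp by (simp add: mult_le_cancel_left_pos)
    then have "l < M0"
    proof (rule contrapos_pp)
      assume "\<not> l < M0"
      then have "(1/2::real)^l \<le> (1/2)^M0" by (intro power_decreasing) auto
      then show "\<not> r \<le> (1/2)^l" using M0 by linarith
    qed
    then show "h \<in> (\<lambda>l. h_max n w * (1/2)^l) ` {..<M0}" using l by auto
  qed
  have Hfin: "finite (H_set n w)" by (rule finite_subset[OF Hsub]) simp
  have Ssub: "S_set n w \<subseteq> (\<lambda>(i,h). (w i, h)) ` ({..<n} \<times> H_set n w)"
    unfolding S_set_def by auto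
  have Sfin: "finite (S_set n w)" by (rule finite_subset[OF Ssub]) (simp add: Hfin)
  have wne: "w i0 \<noteq> w i1" using wdist Lp by auto
  have "(w i0, h_max n w) \<in> S_set n w"
    unfolding S_set_def using i0(1) hmax_in by blast
  moreover have "(w i1, h_max n w) \<in> S_set n w"
    unfolding S_set_def using i1(1) hmax_in by blast
  ultimately have two: "{(w i0, h_max n w), (w i1, h_max n w)} \<subseteq> S_set n w" by simp
  have p2: "card (S_set n w) \<ge> 2"
    using card_mono[OF Sfin two] wne by simp
  define p where "p = card (S_set n w)"
  define hn where "hn = (ln (real p) / real n) powr a"
  have lnp: "ln 2 \<le> ln (real p)" using p2 unfolding p_def by simp
  have hn_lo: "(ln 2 / real n) powr a \<le> hn"
    unfolding hn_def using lnp ln2np n2r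
    by (intro powr_mono2) (auto simp: divide_right_mono ap less_imp_le)
  have hn16: "16 * \<delta> \<le> hn" using dlt pw13 hn_lo unfolding \<delta>_def L_def by linarith
  have hnp: "hn > 0" using hn16 dp by linarith
  have hmin_hn: "h_min n w \<le> hn / 8"
  proof -
    have "h_min n w = h_max n w * r" by (fact hmin_eq)
    also have "\<dots> \<le> (L/2) * r" using hmax_hi rp by (intro mult_right_mono) auto
    also have "\<dots> = 0.2 * (sr - sl) * (ln n / n) powr (1/3)" unfolding r_def L_def by simp
    also have "\<dots> \<le> (ln 2 / n) powr a / 8" using H3 unfolding a_def .
    also have "\<dots> \<le> hn / 8" using hn_lo by simp
    finally show ?thesis .
  qed
  have Kloc: "\<bar>y - x\<bar> \<le> h" if "K ((y - x) / h) \<noteq> 0" "h > 0" for x y h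
  proof -
    have "-1 \<le> (y - x) / h" "(y - x) / h \<le> 1" using Kz that(1) by auto
    then show ?thesis using that(2) by (simp add: field_simps abs_le_iff)
  qed
  have Mnn: "M \<ge> 0" using Kbd abs_ge_zero order_trans by blast
  show ?thesis
    unfolding A9_event_def Let_def p_def[symmetric] a_def[symmetric] hn_def[symmetric]
  proof (intro allI impI)
    fix x1 x2 assume xx: "sl \<le> x1 \<and> x2 \<le> sr \<and> x2 - x1 = hn"
    have xs: "sl \<le> x1" "x2 \<le> sr" "x2 - x1 = hn" using xx by auto
    have hnL: "hn \<le> L" using xx L_def by simp
    define t where "t = (x1 + hn/4 - sl) / \<delta>"
    have t0: "t \<ge> 0" using xx hnp dp unfolding t_def by simp
    define j where "j = nat \<lceil>t\<rceil>"
    have jr: "real j = of_int \<lceil>t\<rceil>" unfolding j_def using t0 by simp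
    have jt: "t \<le> real j" "real j < t + 1" unfolding jr by linarith+
    have tdelta: "t * \<delta> = x1 + hn/4 - sl" unfolding t_def using dp by simp
    have c1: "sl + real j * \<delta> \<ge> x1 + hn/4"
      using mult_right_mono[OF jt(1), of \<delta>] dp tdelta by simp
    have "real j * \<delta> < (t+1) * \<delta>" using jt(2) dp by simp
    then have c2: "sl + (real j + 1) * \<delta> < x1 + hn/4 + 2*\<delta>"
      using tdelta by (simp add: algebra_simps)
    have c3: "sl + (real j + 1) * \<delta> < x2 - hn/4" using c2 hn16 xs dp by linarith
    have "(real j + 1) * \<delta> < real N * \<delta>" using c3 NdL xs hnp L_def by linarith
    then have "real j + 1 < real N" using dp by simp
    then have jN: "j < N" by linarith
    obtain i where i: "i < n" "w i \<in> {sl + real j * \<delta> .. sl + (real j + 1) * \<delta>}"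
      using cov jN unfolding \<delta>_def L_def by blast
    define x where "x = w i"
    have xlo: "x1 + hn/4 \<le> x" and xhi: "x \<le> x2 - hn/4" using i c1 c3 unfolding x_def by auto
    obtain l :: nat where l: "hn/4/2 < h_max n w * (1/2)^l" "h_max n w * (1/2)^l \<le> hn/4"
      using dyadic_choice[of "hn/4" "h_max n w"] hnp hnL hmax_lo by auto
    define h where "h = h_max n w * (1/2)^l"
    have hlo: "hn/8 < h" and hhi: "h \<le> hn/4" using l unfolding h_def by auto
    have hp: "h > 0" using hlo hnp by linarith
    have hH: "h \<in> H_set n w" unfolding H_set_def h_def using hmin_hn hlo h_def by auto
    define s where "s = (x, h)"
    have sS: "s \<in> S_set n w" unfolding S_set_def s_def x_def using i(1) hH by blast
    have Qeq: "Qw K k y1 y2 s = kpow \<bar>y1 - y2\<bar> k * K ((y1 - x) / h) * K ((y2 - x) / h)" for y1 y2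
      unfolding Qw_def s_def by simp
    have supp: "closure {(y1, y2). Qw K k y1 y2 s \<noteq> 0} \<subseteq> {x1..x2} \<times> {x1..x2}"
    proof (rule closure_minimal)
      show "closed ({x1..x2} \<times> {x1..x2})" by (intro closed_Times) auto
      show "{(y1, y2). Qw K k y1 y2 s \<noteq> 0} \<subseteq> {x1..x2} \<times> {x1..x2}"
      proof clarify
        fix y1 y2 assume "Qw K k y1 y2 s \<noteq> 0"
        then have "K ((y1 - x) / h) \<noteq> 0" "K ((y2 - x) / h) \<noteq> 0" unfolding Qeq by auto
        then have "\<bar>y1 - x\<bar> \<le> h" "\<bar>y2 - x\<bar> \<le> h" using Kloc hp by auto
        then show "y1 \<in> {x1..x2} \<and> y2 \<in> {x1..x2}" using xlo xhi hhi by auto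
      qed
    qed
    have upper: "\<forall>y1 y2. Qw K k y1 y2 s \<le> M^2 * kpow hn k"
    proof (intro allI)
      fix y1 y2
      show "Qw K k y1 y2 s \<le> M^2 * kpow hn k"
      proof (cases "K ((y1 - x) / h) = 0 \<or> K ((y2 - x) / h) = 0")
        case True
        then have "Qw K k y1 y2 s = 0" unfolding Qeq by auto
        then show ?thesis using kpow_nonneg[of hn k] by simp
      next
        case False
        then have "\<bar>y1 - x\<bar> \<le> h" "\<bar>y2 - x\<bar> \<le> h" using Kloc hp by auto
        then have "\<bar>y1 - y2\<bar> \<le> hn" using hhi hnp by linarith
        then have kp: "kpow \<bar>y1 - y2\<bar> k \<le> kpow hn k" using kpow_mono k0 by auto
        have "Qw K k y1 y2 s \<le> \<bar>Qw K k y1 y2 s\<bar>" by simp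
        also have "\<dots> = kpow \<bar>y1 - y2\<bar> k * \<bar>K ((y1 - x) / h)\<bar> * \<bar>K ((y2 - x) / h)\<bar>"
          unfolding Qeq by (simp add: abs_mult kpow_nonneg)
        also have "\<dots> \<le> kpow hn k * M * M"
          using kp Kbd kpow_nonneg Mnn by (intro mult_mono) auto
        finally show ?thesis by (simp add: power2_eq_square algebra_simps)
      qed
    qed
    have lower: "\<exists>xl1 xr1 xl2 xr2. x1 \<le> xl1 \<and> xr2 \<le> x2 \<and>
                xr1 - xl1 \<ge> 1/24 * hn \<and> xr2 - xl2 \<ge> 1/24 * hn \<and> xl2 - xr1 \<ge> 1/24 * hn \<and>
                (\<forall>y1 y2. y1 \<in> {xl1..xr1} \<and> y2 \<in> {xl2..xr2} \<longrightarrow>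
                    Qw K k y1 y2 s \<ge> m^2 * (1/24) powr k * kpow hn k)"
    proof (intro exI conjI allI impI)
      show "x1 \<le> x - h/2" "x + h/2 \<le> x2" using xlo xhi hhi hp by auto
      show "1/24 * hn \<le> x - h/6 - (x - h/2)" "1/24 * hn \<le> x + h/2 - (x + h/6)"
        "1/24 * hn \<le> x + h/6 - (x - h/6)" using hlo by auto
      fix y1 y2 assume yy: "y1 \<in> {x - h/2..x - h/6} \<and> y2 \<in> {x + h/6..x + h/2}"
      have d: "hn/24 \<le> \<bar>y1 - y2\<bar>" using yy hlo by auto
      have kp: "(1/24) powr k * kpow hn k \<le> kpow \<bar>y1 - y2\<bar> k"
        using kpow_mono[OF _ d k0] kpow_mult[of "1/24" hn k] hnp by simp
      have a1: "\<bar>(y1 - x) / h\<bar> \<le> 1/2" "\<bar>(y2 - x) / h\<bar> \<le> 1/2"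
        using yy hp by (auto simp: abs_le_iff field_simps)
      have K1: "m \<le> K ((y1 - x) / h)" "m \<le> K ((y2 - x) / h)" using Kmin a1 by auto
      have "m^2 * (1/24) powr k * kpow hn k = ((1/24) powr k * kpow hn k) * m * m"
        by (simp add: power2_eq_square algebra_simps)
      also have "\<dots> \<le> kpow \<bar>y1 - y2\<bar> k * K ((y1 - x) / h) * K ((y2 - x) / h)"
        using kp K1 mpos kpow_nonneg by (intro mult_mono) auto
      finally show "m^2 * (1/24) powr k * kpow hn k \<le> Qw K k y1 y2 s" unfolding Qeq .
    qed
    show "\<exists>s\<in>S_set n w.
             closure {(y1, y2). Qw K k y1 y2 s \<noteq> 0} \<subseteq> {x1..x2} \<times> {x1..x2} \<and>
             (\<forall>y1 y2. Qw K k y1 y2 s \<le> M^2 * kpow hn k) \<and>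
             (\<exists>xl1 xr1 xl2 xr2. x1 \<le> xl1 \<and> xr2 \<le> x2 \<and>
                xr1 - xl1 \<ge> 1/24 * hn \<and> xr2 - xl2 \<ge> 1/24 * hn \<and> xl2 - xr1 \<ge> 1/24 * hn \<and>
                (\<forall>y1 y2. y1 \<in> {xl1..xr1} \<and> y2 \<in> {xl2..xr2} \<longrightarrow>
                    Qw K k y1 y2 s \<ge> m^2 * (1/24) powr k * kpow hn k))"
      by (rule bexI[OF _ sS], intro conjI, rule supp, rule upper, rule lower)
  qed
qed



lemma H3_ev:
  fixes L \<beta> :: real
  assumes bp: "0 < \<beta>" and Lp: "0 < L"
  shows "eventually (\<lambda>n::nat. 0.2 * L * (ln (real n) / real n) powr (1/3) \<le> (ln 2 / real n) powr (1/(2*\<beta>+3)) / 8) sequentially"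
proof -
  define a where "a = 1/(2*\<beta>+3)"
  define e where "e = 1/3 - a"
  have ep: "e > 0" unfolding e_def a_def using bp by (simp add: field_simps)
  have lim: "filterlim (\<lambda>n::nat. real n powr e / ln (real n) powr (1/3)) at_top at_top"
    using ep by real_asymp
  define X where "X = 1.6 * L / ln 2 powr a"
  have ev1: "eventually (\<lambda>n::nat. real n powr e / ln (real n) powr (1/3) \<ge> X) sequentially"
    using lim by (simp add: filterlim_at_top)
  have ev2: "eventually (\<lambda>n::nat. n \<ge> 2) sequentially" by (auto simp add: eventually_sequentially)
  show ?thesis
    using ev1 ev2
  proof eventually_elim
    case (elim n)
    have n2: "real n \<ge> 2" using elim(2) by simp
    have lnp: "ln (real n) > 0" using n2 by simp
    have lq: "ln (real n) powr (1/3) > 0" using lnp by simp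
    have l2: "ln (2::real) powr a > 0" by simp
    have np: "real n > 0" using n2 by simp
    have "X * ln (real n) powr (1/3) \<le> real n powr e" using elim(1) lq by (simp add: field_simps)
    then have key: "1.6 * L * ln (real n) powr (1/3) \<le> ln 2 powr a * real n powr e"
      unfolding X_def using l2 by (simp add: field_simps)
    have sp: "real n powr (1/3) = real n powr a * real n powr e"
      unfolding e_def by (simp add: powr_add[symmetric])
    have "0.2 * L * (ln (real n) / real n) powr (1/3) = 0.2 * L * ln (real n) powr (1/3) / real n powr (1/3)"
      using lnp np by (simp add: powr_divide)
    also have "\<dots> = (1.6 * L * ln (real n) powr (1/3)) / (8 * real n powr (1/3))" by simp
    also have "\<dots> \<le> (ln 2 powr a * real n powr e) / (8 * real n powr (1/3))"
      using key np by (intro divide_right_mono) auto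
    also have "\<dots> = ln 2 powr a / real n powr a / 8"
      unfolding sp using np by (simp add: field_simps)
    also have "\<dots> = (ln 2 / real n) powr a / 8" using np by (simp add: powr_divide)
    finally show ?case unfolding a_def .
  qed
qed

lemma PiM_box:
  fixes D :: "'a measure"
  assumes "prob_space D" "A \<in> sets D"
  shows "measure (PiM {..<n} (\<lambda>_. D)) (PiE {..<n} (\<lambda>_. A)) = (measure D A)^n"
proof -
  interpret prob_space D by fact
  interpret product_sigma_finite "\<lambda>_. D"
    by (simp add: product_sigma_finite_def sigma_finite_measure_axioms)
  have "emeasure (PiM {..<n} (\<lambda>_. D)) (PiE {..<n} (\<lambda>_. A)) = (\<Prod>i\<in>{..<n}. emeasure D A)"
    using emeasure_PiM[of "{..<n}" "\<lambda>_. A"] assms by simp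
  also have "\<dots> = ennreal ((measure D A)^n)"
    by (simp add: emeasure_eq_measure prod_ennreal[symmetric] ennreal_power)
  finally show ?thesis by (simp add: measure_def)
qed

lemma lim0:
  fixes L c :: real
  assumes "L > 0" "c > 0"
  shows "((\<lambda>n::nat. (16*L*(real n / ln 2) powr (1/3) + 5) * exp(-(c*L*real n/(16*L*(real n / ln 2) powr (1/3) + 5)))) \<longlongrightarrow> 0) at_top"
  using assms by real_asymp



lemma prob_bound:
  fixes D :: "real measure" and A :: "real set" and C :: "nat \<Rightarrow> real set"
  assumes pD: "prob_space D" and sD: "sets D = sets borel"
    and A: "A \<in> sets borel" "measure D A = 1"
    and C: "\<And>j. C j \<in> sets borel" "\<And>j. j < N \<Longrightarrow> c * d \<le> measure D (C j)"
  shows "measure (PiM {..<n} (\<lambda>_. D)) (PiE {..<n} (\<lambda>_. A) - (\<Union>j<N. PiE {..<n} (\<lambda>_. UNIV - C j)))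
           \<ge> 1 - real N * exp (-(c * d * real n))"
proof -
  interpret D: prob_space D by fact
  let ?P = "PiM {..<n} (\<lambda>_. D)"
  interpret P: prob_space ?P by (rule prob_space_PiM) (use pD in auto)
  have spD: "space D = UNIV" using sD sets_eq_imp_space_eq by fastforce
  let ?A = "PiE {..<n} (\<lambda>_. A)"
  let ?B = "\<lambda>j. PiE {..<n} (\<lambda>_. UNIV - C j)"
  have Am: "?A \<in> sets ?P" using A sD by (intro sets_PiM_I_finite) auto
  have Bm: "?B j \<in> sets ?P" for j using C sD by (intro sets_PiM_I_finite) auto
  have Um: "(\<Union>j<N. ?B j) \<in> sets ?P" using Bm by auto
  have mA: "measure ?P ?A = 1" using PiM_box[OF pD, of A n] A sD by simp
  have mB: "measure ?P (?B j) \<le> exp (-(c * d * real n))" if "j < N" for j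
  proof -
    have "measure ?P (?B j) = (measure D (UNIV - C j))^n"
      using PiM_box[OF pD, of "UNIV - C j" n] C sD by simp
    also have "measure D (UNIV - C j) = 1 - measure D (C j)"
      using D.prob_compl[of "C j"] C sD spD by simp
    also have "(1 - measure D (C j))^n \<le> (exp (-(c*d)))^n"
    proof (rule power_mono)
      show "0 \<le> 1 - measure D (C j)" using D.prob_le_1 by simp
      have "1 - measure D (C j) \<le> 1 - c * d" using C(2)[OF that] by simp
      also have "\<dots> \<le> exp (-(c*d))" using exp_ge_add_one_self[of "-(c*d)"] by simp
      finally show "1 - measure D (C j) \<le> exp (-(c*d))" .
    qed
    also have "(exp (-(c*d)))^n = exp (-(c * d * real n))"
      by (simp add: exp_of_nat_mult[symmetric] algebra_simps)
    finally show ?thesis .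
  qed
  have "measure ?P (\<Union>j<N. ?B j) \<le> (\<Sum>j<N. measure ?P (?B j))"
    using Bm by (intro P.finite_measure_subadditive_finite) auto
  also have "\<dots> \<le> (\<Sum>j<N. exp (-(c * d * real n)))" using mB by (intro sum_mono) auto
  also have "\<dots> = real N * exp (-(c * d * real n))" by simp
  finally have mU: "measure ?P (\<Union>j<N. ?B j) \<le> real N * exp (-(c * d * real n))" .
  have "?A - (\<Union>j<N. ?B j) = ?A - (?A \<inter> (\<Union>j<N. ?B j))" by auto
  then have "measure ?P (?A - (\<Union>j<N. ?B j)) = measure ?P ?A - measure ?P (?A \<inter> (\<Union>j<N. ?B j))"
    using P.finite_measure_Diff[of ?A "?A \<inter> (\<Union>j<N. ?B j)"] Am Um by auto
  moreover have "measure ?P (?A \<inter> (\<Union>j<N. ?B j)) \<le> measure ?P (\<Union>j<N. ?B j)"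
    using Um by (intro P.finite_measure_mono) auto
  ultimately show ?thesis using mA mU by linarith
qed



theorem proposition3:
  fixes D :: "real measure" and K :: "real \<Rightarrow> real" and k sl sr :: real
  assumes probD: "prob_space D"
    and setsD: "sets D = sets borel"
    and supp_ne: "dist_support D \<noteq> {}"
    and supp_bdd: "bounded (dist_support D)"
    and sl_def: "sl = Inf (dist_support D)"
    and sr_def: "sr = Sup (dist_support D)"
    and k_nonneg: "k \<ge> 0"
    and A8: "\<exists>c3 C3. c3 > 0 \<and> C3 > 0 \<and>
              (\<forall>x1 x2. sl \<le> x1 \<and> x1 \<le> x2 \<and> x2 \<le> sr \<longrightarrow>
                 c3 * (x2 - x1) \<le> measure D {x1..x2} \<and> measure D {x1..x2} \<le> C3 * (x2 - x1))"
    and K_supp: "closure {t. K t \<noteq> 0} = {-1..1}"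
    and K_cont: "continuous_on UNIV K"
    and K_pos: "\<And>t. -1 < t \<Longrightarrow> t < 1 \<Longrightarrow> K t > 0"
  shows "\<forall>\<beta>. 0 < \<beta> \<and> \<beta> \<le> 1 \<longrightarrow>
           (\<exists>c4 C4 c5. c4 > 0 \<and> C4 > 0 \<and> c5 > 0 \<and>
              (\<exists>F :: nat \<Rightarrow> (nat \<Rightarrow> real) set.
                 (\<forall>n. F n \<in> sets (PiM {..<n} (\<lambda>_. D)) \<and>
                      F n \<subseteq> {w \<in> space (PiM {..<n} (\<lambda>_. D)). A9_event K k sl sr \<beta> c4 C4 c5 n w}) \<and>
                 (\<lambda>n. measure (PiM {..<n} (\<lambda>_. D)) (F n)) \<longlonglongrightarrow> 1))"
proof -
  interpret D: prob_space D by fact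
  let ?S = "dist_support D"
  have bb: "bdd_below ?S" "bdd_above ?S" using supp_bdd by (auto simp: bounded_imp_bdd_below bounded_imp_bdd_above)
  have sle: "sl \<le> sr" unfolding sl_def sr_def by (rule cInf_le_cSup[OF supp_ne bb(2) bb(1)])
  have full: "measure D {sl..sr} = 1"
    using support_full[OF probD setsD supp_ne supp_bdd] sl_def sr_def by simp
  obtain c3 C3 where c3: "c3 > 0" "C3 > 0"
    "\<And>x1 x2. sl \<le> x1 \<Longrightarrow> x1 \<le> x2 \<Longrightarrow> x2 \<le> sr \<Longrightarrow> c3 * (x2 - x1) \<le> measure D {x1..x2}"
    "\<And>x1 x2. sl \<le> x1 \<Longrightarrow> x1 \<le> x2 \<Longrightarrow> x2 \<le> sr \<Longrightarrow> measure D {x1..x2} \<le> C3 * (x2 - x1)"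
    using A8 by blast
  have slt: "sl < sr"
  proof (rule ccontr)
    assume "\<not> sl < sr"
    then have "sl = sr" using sle by simp
    then have "measure D {sl..sr} \<le> 0" using c3(4)[of sl sl] by simp
    then show False using full by simp
  qed
  have Kz: "\<forall>t. K t \<noteq> 0 \<longrightarrow> -1 \<le> t \<and> t \<le> 1"
  proof (intro allI impI)
    fix t assume "K t \<noteq> 0"
    then have "t \<in> closure {t. K t \<noteq> 0}" by (intro subsetD[OF closure_subset]) simp
    then show "-1 \<le> t \<and> t \<le> 1" using K_supp by simp
  qed
  have "compact (K ` {-1..1})"
    using continuous_on_subset[OF K_cont subset_UNIV] by (intro compact_continuous_image) auto
  then have "bounded (K ` {-1..1})" by (rule compact_imp_bounded)
  then obtain B where B: "\<forall>y\<in>K ` {-1..1}. norm y \<le> B"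
    unfolding bounded_iff by blast
  define M where "M = \<bar>B\<bar> + 1"
  have Mp: "M > 0" unfolding M_def by simp
  have Kbd: "\<forall>t. \<bar>K t\<bar> \<le> M"
  proof
    fix t show "\<bar>K t\<bar> \<le> M"
    proof (cases "K t = 0")
      case True then show ?thesis using Mp by simp
    next
      case False
      then have "t \<in> {-1..1}" using Kz by simp
      then have "\<bar>K t\<bar> \<le> B" using B by auto
      then show ?thesis unfolding M_def by simp
    qed
  qed
  obtain t0 where t0: "t0 \<in> {-1/2..1/2::real}" "\<forall>y\<in>{-1/2..1/2}. K t0 \<le> K y"
    using continuous_attains_inf[of "{-1/2..1/2::real}" K] continuous_on_subset[OF K_cont subset_UNIV]
    by auto
  define m where "m = K t0"
  have mp: "m > 0" unfolding m_def using t0(1) K_pos by auto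
  have Kmin: "\<forall>t. \<bar>t\<bar> \<le> 1/2 \<longrightarrow> m \<le> K t"
  proof (intro allI impI)
    fix t :: real assume "\<bar>t\<bar> \<le> 1/2"
    then have "t \<in> {-1/2..1/2}" by (simp add: abs_le_iff) linarith
    then show "m \<le> K t" using t0(2) unfolding m_def by blast
  qed
  show ?thesis
  proof (intro allI impI)
    fix \<beta> :: real assume bq: "0 < \<beta> \<and> \<beta> \<le> 1"
    define L where "L = sr - sl"
    have Lp: "L > 0" using slt L_def by simp
    define Nn where "Nn = (\<lambda>n::nat. nat \<lceil>16 * L * (real n / ln 2) powr (1/3)\<rceil> + 4)"
    define cell where "cell = (\<lambda>n j. {sl + real j * ((sr-sl)/real (Nn n)) .. sl + (real j + 1) * ((sr-sl)/real (Nn n))})"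
    define G where "G = (\<lambda>n. PiE {..<n} (\<lambda>_. {sl..sr}) - (\<Union>j<Nn n. PiE {..<n} (\<lambda>_. UNIV - cell n j)))"
    have Nn_lo: "16 * L * (real n / ln 2) powr (1/3) + 4 \<le> real (Nn n)" for n
    proof -
      have "0 \<le> 16 * L * (real n / ln 2) powr (1/3)" using Lp by simp
      then show ?thesis unfolding Nn_def by linarith
    qed
    have Nn_hi: "real (Nn n) \<le> 16 * L * (real n / ln 2) powr (1/3) + 5" for n
    proof -
      have "0 \<le> 16 * L * (real n / ln 2) powr (1/3)" using Lp by simp
      then show ?thesis unfolding Nn_def by linarith
    qed
    have Npos: "real (Nn n) > 0" for n
    proof -
      have "0 \<le> 16 * L * (real n / ln 2) powr (1/3)" using Lp by simp
      then show ?thesis using Nn_lo[of n] by linarith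
    qed
    have ev: "eventually (\<lambda>n::nat. 2 \<le> n \<and> 0.2 * (sr - sl) * (ln (real n) / real n) powr (1/3) \<le> (ln 2 / real n) powr (1/(2*\<beta>+3)) / 8) sequentially"
    proof -
      have h3: "eventually (\<lambda>n::nat. 0.2 * L * (ln (real n) / real n) powr (1/3) \<le> (ln 2 / real n) powr (1/(2*\<beta>+3)) / 8) sequentially"
        using H3_ev[of \<beta> L] bq Lp by blast
      show ?thesis using eventually_conj[OF eventually_ge_at_top[of 2] h3] unfolding L_def .
    qed
    then obtain n0 where n0: "\<And>n. n \<ge> n0 \<Longrightarrow> 2 \<le> n \<and> 0.2 * (sr - sl) * (ln (real n) / real n) powr (1/3) \<le> (ln 2 / real n) powr (1/(2*\<beta>+3)) / 8"
      unfolding eventually_sequentially by blast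
    define F where "F = (\<lambda>n. if n \<ge> n0 then G n else {})"
    have Gm: "G n \<in> sets (PiM {..<n} (\<lambda>_. D))" for n
      unfolding G_def cell_def using setsD
      by (intro sets.Diff sets.finite_UN sets_PiM_I_finite) auto
    have Gsub: "G n \<subseteq> {w \<in> space (PiM {..<n} (\<lambda>_. D)). A9_event K k sl sr \<beta> (m^2 * (1/24) powr k) (M^2) (1/24) n w}"
      if nn: "n \<ge> n0" for n
    proof
      fix w assume wG: "w \<in> G n"
      have wA: "w \<in> PiE {..<n} (\<lambda>_. {sl..sr})" using wG unfolding G_def by (rule DiffD1)
      have spP: "space (PiM {..<n} (\<lambda>_. D)) = PiE {..<n} (\<lambda>_. UNIV)"
        using setsD sets_eq_imp_space_eq[OF setsD] by (simp add: space_PiM)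
      have "PiE {..<n} (\<lambda>_. {sl..sr}) \<subseteq> PiE {..<n} (\<lambda>_. (UNIV::real set))" by (rule PiE_mono) simp
      then have wsp: "w \<in> space (PiM {..<n} (\<lambda>_. D))" using wA unfolding spP by blast
      have samp: "\<forall>i<n. w i \<in> {sl..sr}"
      proof (intro allI impI)
        fix i assume "i < n"
        then show "w i \<in> {sl..sr}" using PiE_mem[OF wA, of i] by simp
      qed
      have cov: "\<forall>j<Nn n. \<exists>i<n. w i \<in> cell n j"
      proof (intro allI impI)
        fix j assume j: "j < Nn n"
        have "w \<notin> PiE {..<n} (\<lambda>_. UNIV - cell n j)" using wG j unfolding G_def by auto
        then show "\<exists>i<n. w i \<in> cell n j" using wA by (auto simp: PiE_iff)
      qed
      have n2: "2 \<le> n" and H3: "0.2 * (sr - sl) * (ln (real n) / real n) powr (1/3) \<le> (ln 2 / real n) powr (1/(2*\<beta>+3)) / 8"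
        using n0[OF nn] by auto
      have N4: "4 \<le> Nn n" unfolding Nn_def by simp
      have dlt: "(sr - sl) / real (Nn n) \<le> (ln 2 / real n) powr (1/3) / 16"
      proof -
        define q where "q = (real n / ln 2) powr (1/3)"
        have np: "real n > 0" using n2 by simp
        have qp: "q > 0" unfolding q_def using np by simp
        have inv: "(ln 2 / real n) powr (1/3) * q = 1"
          unfolding q_def using np by (simp add: powr_mult[symmetric])
        have "16 * L * q \<le> real (Nn n)" using Nn_lo[of n] unfolding q_def by simp
        then have "L / real (Nn n) \<le> L / (16 * L * q)"
          using Lp qp Npos[of n] by (intro divide_left_mono) auto
        also have "\<dots> = 1 / (16 * q)" using Lp by simp
        also have "\<dots> = (ln 2 / real n) powr (1/3) / 16" using inv qp by (simp add: field_simps)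
        finally show ?thesis unfolding L_def .
      qed
      have "A9_event K k sl sr \<beta> (m^2 * (1/24) powr k) (M^2) (1/24) n w"
        by (rule core[OF slt k_nonneg _ Kbd Kz Kmin mp n2 N4 dlt H3 samp]) (use bq cov in \<open>auto simp: cell_def\<close>)
      then show "w \<in> {w \<in> space (PiM {..<n} (\<lambda>_. D)). A9_event K k sl sr \<beta> (m^2 * (1/24) powr k) (M^2) (1/24) n w}"
        using wsp by simp
    qed
    define g where "g = (\<lambda>n::nat. (16*L*(real n / ln 2) powr (1/3) + 5) * exp(-(c3*L*real n/(16*L*(real n / ln 2) powr (1/3) + 5))))"
    have g0: "g \<longlonglongrightarrow> 0" unfolding g_def using lim0[OF Lp c3(1)] .
    have Gbound: "measure (PiM {..<n} (\<lambda>_. D)) (G n) \<ge> 1 - g n" for n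
    proof -
      define d where "d = (sr - sl) / real (Nn n)"
      have dp: "d > 0" unfolding d_def using slt Npos[of n] by simp
      have cellm: "c3 * d \<le> measure D (cell n j)" if "j < Nn n" for j
      proof -
        have "real j + 1 \<le> real (Nn n)" using that by linarith
        then have "(real j + 1) * d \<le> real (Nn n) * d" using dp by (intro mult_right_mono) auto
        also have "real (Nn n) * d = sr - sl" unfolding d_def using Npos[of n] by simp
        finally have up: "sl + (real j + 1) * d \<le> sr" by simp
        have "c3 * ((sl + (real j + 1) * d) - (sl + real j * d)) \<le> measure D {sl + real j * d .. sl + (real j + 1) * d}"
          using dp up by (intro c3(3)) (auto simp: algebra_simps)
        then show ?thesis unfolding cell_def d_def[symmetric] by (simp add: algebra_simps)
      qed
      have pb: "measure (PiM {..<n} (\<lambda>_. D)) (G n) \<ge> 1 - real (Nn n) * exp (-(c3 * d * real n))"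
        unfolding G_def
        by (rule prob_bound[OF probD setsD _ full]) (use cellm in \<open>auto simp: cell_def\<close>)
      have "real (Nn n) * exp (-(c3 * d * real n)) \<le> g n"
        unfolding g_def
      proof (intro mult_mono)
        show "real (Nn n) \<le> 16 * L * (real n / ln 2) powr (1/3) + 5" by (rule Nn_hi)
        have "L / (16 * L * (real n / ln 2) powr (1/3) + 5) \<le> d"
          unfolding d_def L_def[symmetric] using Nn_hi[of n] Npos[of n] Lp
          by (intro divide_left_mono) auto
        then have "c3 * (L / (16 * L * (real n / ln 2) powr (1/3) + 5)) * real n \<le> c3 * d * real n"
          using c3(1) by (intro mult_right_mono mult_left_mono) auto
        then show "exp (-(c3 * d * real n)) \<le> exp (-(c3*L*real n/(16*L*(real n / ln 2) powr (1/3) + 5)))"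
          by simp
        show "0 \<le> 16 * L * (real n / ln 2) powr (1/3) + 5" using Lp by simp
        show "0 \<le> exp (-(c3 * d * real n))" by simp
      qed
      then show ?thesis using pb by linarith
    qed
    have lim: "(\<lambda>n. measure (PiM {..<n} (\<lambda>_. D)) (F n)) \<longlonglongrightarrow> 1"
    proof (rule tendsto_sandwich[of "\<lambda>n. 1 - g n" _ _ "\<lambda>_. 1"])
      show "eventually (\<lambda>n. 1 - g n \<le> measure (PiM {..<n} (\<lambda>_. D)) (F n)) sequentially"
        unfolding eventually_sequentially F_def using Gbound by auto
      show "eventually (\<lambda>n. measure (PiM {..<n} (\<lambda>_. D)) (F n) \<le> 1) sequentially"
      proof (rule always_eventually, rule allI)
        fix n :: nat
        interpret P: prob_space "PiM {..<n} (\<lambda>_. D)" by (rule prob_space_PiM) (use probD in auto)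
        show "measure (PiM {..<n} (\<lambda>_. D)) (F n) \<le> 1" by (rule P.prob_le_1)
      qed
      show "(\<lambda>n. 1 - g n) \<longlonglongrightarrow> 1" using tendsto_diff[OF tendsto_const g0, of 1] by simp
      show "(\<lambda>_. 1::real) \<longlonglongrightarrow> 1" by simp
    qed
    show "\<exists>c4 C4 c5. c4 > 0 \<and> C4 > 0 \<and> c5 > 0 \<and>
              (\<exists>F :: nat \<Rightarrow> (nat \<Rightarrow> real) set.
                 (\<forall>n. F n \<in> sets (PiM {..<n} (\<lambda>_. D)) \<and>
                      F n \<subseteq> {w \<in> space (PiM {..<n} (\<lambda>_. D)). A9_event K k sl sr \<beta> c4 C4 c5 n w}) \<and>
                 (\<lambda>n. measure (PiM {..<n} (\<lambda>_. D)) (F n)) \<longlonglongrightarrow> 1)"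
    proof (intro exI conjI allI)
      show "0 < m^2 * (1/24) powr k" using mp by simp
      show "0 < M^2" using Mp by simp
      show "0 < (1/24::real)" by simp
      fix n :: nat
      show "F n \<in> sets (PiM {..<n} (\<lambda>_. D))" unfolding F_def using Gm by auto
      show "F n \<subseteq> {w \<in> space (PiM {..<n} (\<lambda>_. D)). A9_event K k sl sr \<beta> (m^2 * (1/24) powr k) (M^2) (1/24) n w}"
        unfolding F_def using Gsub by auto
    next
      show "(\<lambda>n. measure (PiM {..<n} (\<lambda>_. D)) (F n)) \<longlonglongrightarrow> 1" by (rule lim)
    qed
  qed
qed

end
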